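(* Let $A=(a_{i,j})$ be an $n\times n$ matrix with entries in an associative (not necessarily commutative) algebra and fix $1\le j\le n$. If the column determinant of every left $j$-minor of $A$ is zero, then $\mathrm{cdet}A=0$.
   Context: For an $m\times m$ matrix $B=(b_{i,k})$ over an associative algebra, its column determinant is $\mathrm{cdet}B:=\sum_{w\in S_m}\mathrm{sgn}(w)b_{w1,1}b_{w2,2}\cdots b_{wm,m}$. A left $j$-minor of $A$ is a $j\times j$ submatrix $(a_{i_p,q})_{1\le p,q\le j}$ for some $1\le i_1<i_2<\cdots<i_j\le n$ (rows $i_1,\dots,i_j$, columns $1,\dots,j$). *)

theory Defs
  imports "HOL-Combinatorics.Permutations"
begin

text \<open>Matrices are functions nat => nat => 'a, indexed from 1 (rows i, columns k).\<close>

definition cdet :: "nat \<Rightarrow> (nat \<Rightarrow> nat \<Rightarrow> 'a::ring_1) \<Rightarrow> 'a" where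
  "cdet m B = (\<Sum>w | w permutes {1..m}.
      of_int (sign w) * prod_list (map (\<lambda>k. B (w k) k) [1..<m+1]))"

definition left_minor :: "(nat \<Rightarrow> nat \<Rightarrow> 'a) \<Rightarrow> (nat \<Rightarrow> nat) \<Rightarrow> nat \<Rightarrow> nat \<Rightarrow> 'a" where
  "left_minor A i = (\<lambda>p q. A (i p) q)"

definition row_selection :: "nat \<Rightarrow> nat \<Rightarrow> (nat \<Rightarrow> nat) \<Rightarrow> bool" where
  "row_selection n j i \<longleftrightarrow> (\<forall>p\<in>{1..j}. i p \<in> {1..n}) \<and>
      (\<forall>p q. 1 \<le> p \<longrightarrow> p < q \<longrightarrow> q \<le> j \<longrightarrow> i p < i q)"

end

theory Submission
  imports Defs
begin

definition incr :: "nat \<Rightarrow> (nat \<Rightarrow> nat) \<Rightarrow> bool" where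
  "incr j f \<longleftrightarrow> (\<forall>p q. 1 \<le> p \<longrightarrow> p < q \<longrightarrow> q \<le> j \<longrightarrow> f p < f q)"

lemma incr_list:
  assumes "incr j f" shows "sorted_wrt (<) (map f [1..<j+1])"
  using assms unfolding incr_def sorted_wrt_iff_nth_less by (auto simp del: upt_Suc simp: nth_upt)

lemma incr_inj: "incr j f \<Longrightarrow> inj_on f {1..j}"
  unfolding incr_def inj_on_def by (metis atLeastAtMost_iff linorder_neqE_nat less_irrefl)

lemma incr_unique:
  assumes "incr j f" "incr j g" "f ` {1..j} = g ` {1..j}" "p \<in> {1..j}"
  shows "f p = g p"
proof -
  have "map f [1..<j+1] = map g [1..<j+1]"
    apply (rule sorted_distinct_set_unique)
    using incr_list[OF assms(1)] incr_list[OF assms(2)] assms(3)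
    by (auto simp del: upt_Suc simp: strict_sorted_iff atLeastLessThanSuc_atLeastAtMost)
  then show ?thesis using assms(4) by (simp del: upt_Suc add: map_eq_conv)
qed

lemma incr_exists:
  assumes "finite S" "card S = j"
  shows "\<exists>e. incr j e \<and> e ` {1..j} = S"
proof -
  define L where "L = sorted_list_of_set S"
  have L: "sorted_wrt (<) L" "length L = j" "set L = S"
    using assms unfolding L_def by auto
  define e where "e p = L ! (p - 1)" for p
  have "incr j e" using L(1,2) unfolding incr_def e_def sorted_wrt_iff_nth_less by auto
  moreover have "e ` {1..j} = S"
  proof -
    have S1: "{1..j} = Suc ` {0..<j}" by (simp add: image_Suc_atLeastLessThan atLeastLessThanSuc_atLeastAtMost)
    have eS: "e \<circ> Suc = (!) L" by (rule ext) (simp add: e_def)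
    have "e ` {1..j} = (\<lambda>i. L ! i) ` {0..<j}"
      by (simp only: S1 image_comp eS)
    also have "\<dots> = set L" using L(2) by (auto simp: set_conv_nth)
    finally show ?thesis using L(3) by simp
  qed
  ultimately show ?thesis by blast
qed


lemma decomp:
  assumes w: "w permutes {1..n}" and jn: "j \<le> n"
  shows "\<exists>w0 \<pi>. w0 permutes {1..n} \<and> incr j w0 \<and> \<pi> permutes {1..j} \<and> w = w0 \<circ> \<pi>"
proof -
  define S where "S = w ` {1..j}"
  have injw: "inj_on w {1..j}" using permutes_inj_on[OF w] .
  have "card S = j" unfolding S_def using card_image[OF injw] by simp
  then obtain e where e: "incr j e" "e ` {1..j} = S" using incr_exists[of S j] S_def by auto
  have bije: "bij_betw e {1..j} S" using e incr_inj[OF e(1)] by (simp add: bij_betw_def)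
  define \<pi> where "\<pi> k = (if k \<in> {1..j} then inv_into {1..j} e (w k) else k)" for k
  have bw: "bij_betw w {1..j} S" using injw S_def by (simp add: bij_betw_def)
  have "bij_betw (inv_into {1..j} e \<circ> w) {1..j} {1..j}"
    using bij_betw_trans[OF bw bij_betw_inv_into[OF bije]] .
  then have "bij_betw \<pi> {1..j} {1..j}"
    by (rule bij_betw_cong[THEN iffD1, rotated]) (simp add: \<pi>_def)
  then have pi: "\<pi> permutes {1..j}"
    by (rule bij_imp_permutes) (auto simp: \<pi>_def)
  define w0 where "w0 k = (if k \<in> {1..j} then e k else w k)" for k
  have eq: "w = w0 \<circ> \<pi>"
  proof
    fix k show "w k = (w0 \<circ> \<pi>) k"
    proof (cases "k \<in> {1..j}")
      case True
      then have "w k \<in> S" using S_def by auto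
      moreover have "\<pi> k \<in> {1..j}" using True permutes_in_image[OF pi] by blast
      ultimately show ?thesis using True e(2)
        by (simp add: w0_def \<pi>_def f_inv_into_f)
    next
      case False
      then have "\<pi> k = k" unfolding \<pi>_def by (simp only: if_not_P if_False)
      then show ?thesis using False unfolding w0_def by (simp only: comp_apply if_not_P if_False)
    qed
  qed
  have "w0 = w \<circ> inv \<pi>"
    using eq permutes_inv_o(1)[OF pi] by (metis comp_assoc comp_id)
  moreover have "inv \<pi> permutes {1..n}"
    using permutes_inv[OF pi] permutes_subset jn by fastforce
  ultimately have "w0 permutes {1..n}" using w by (simp add: permutes_compose)
  moreover have "incr j w0" using e(1) unfolding incr_def w0_def by auto
  ultimately show ?thesis using pi eq by blast
qed

lemma comp_inj:
  assumes "w0 permutes {1..n}" "incr j w0" "\<pi> permutes {1..j}"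
    "w1 permutes {1..n}" "incr j w1" "\<sigma> permutes {1..j}"
    "w0 \<circ> \<pi> = w1 \<circ> \<sigma>"
  shows "w0 = w1 \<and> \<pi> = \<sigma>"
proof -
  have "w0 ` {1..j} = (w0 \<circ> \<pi>) ` {1..j}" using permutes_image[OF assms(3)] by (metis image_comp)
  also have "\<dots> = (w1 \<circ> \<sigma>) ` {1..j}" using assms(7) by simp
  also have "\<dots> = w1 ` {1..j}" using permutes_image[OF assms(6)] by (metis image_comp)
  finally have im: "w0 ` {1..j} = w1 ` {1..j}" .
  have "w0 = w1"
  proof
    fix k show "w0 k = w1 k"
    proof (cases "k \<in> {1..j}")
      case True then show ?thesis using incr_unique[OF assms(2) assms(5) im] by blast
    next
      case False
      then have "\<pi> k = k" "\<sigma> k = k" using assms(3,6) by (auto simp: permutes_not_in)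
      then show ?thesis using fun_cong[OF assms(7), of k] by simp
    qed
  qed
  moreover have "\<pi> = \<sigma>"
  proof
    fix k have "w0 (\<pi> k) = w0 (\<sigma> k)" using fun_cong[OF assms(7), of k] \<open>w0 = w1\<close> by simp
    then show "\<pi> k = \<sigma> k" using permutes_inj[OF assms(1)] by (simp add: inj_eq)
  qed
  ultimately show ?thesis by simp
qed


theorem lemma2p1:
  fixes A :: "nat \<Rightarrow> nat \<Rightarrow> 'a::ring_1" and n j :: nat
  assumes "1 \<le> j" and "j \<le> n"
    and "\<forall>i. row_selection n j i \<longrightarrow> cdet j (left_minor A i) = 0"
  shows "cdet n A = 0"
proof -
  define f where "f w = of_int (sign w) * prod_list (map (\<lambda>k. A (w k) k) [1..<n+1])" for w :: "nat \<Rightarrow> nat"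
  define W0 where "W0 = {w0. w0 permutes {1..n} \<and> incr j w0}"
  define Pj where "Pj = {\<pi>. \<pi> permutes {1..j}}"
  define g where "g = (\<lambda>(a::nat\<Rightarrow>nat, b::nat\<Rightarrow>nat). a \<circ> b)"
  have finW0: "finite W0" unfolding W0_def
    by (rule finite_subset[OF _ finite_permutations[of "{1..n}"]]) auto
  have finPj: "finite Pj" unfolding Pj_def using finite_permutations[of "{1..j}"] by simp
  have img: "{w. w permutes {1..n}} = g ` (W0 \<times> Pj)"
  proof
    show "{w. w permutes {1..n}} \<subseteq> g ` (W0 \<times> Pj)"
    proof
      fix w assume "w \<in> {w. w permutes {1..n}}"
      then obtain w0 \<pi> where "w0 permutes {1..n}" "incr j w0" "\<pi> permutes {1..j}" "w = w0 \<circ> \<pi>"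
        using decomp[of w n j] assms(2) by auto
      then show "w \<in> g ` (W0 \<times> Pj)" unfolding g_def W0_def Pj_def by force
    qed
  next
    show "g ` (W0 \<times> Pj) \<subseteq> {w. w permutes {1..n}}"
    proof
      fix x assume "x \<in> g ` (W0 \<times> Pj)"
      then obtain a b where ab: "a \<in> W0" "b \<in> Pj" "x = a \<circ> b" unfolding g_def by auto
      have "b permutes {1..n}" using ab(2) assms(2) unfolding Pj_def
        by (rule_tac permutes_subset) auto
      then show "x \<in> {w. w permutes {1..n}}" using ab(1,3) unfolding W0_def
        by (simp add: permutes_compose)
    qed
  qed
  have inj: "inj_on g (W0 \<times> Pj)"
    unfolding inj_on_def g_def W0_def Pj_def using comp_inj by fastforce
  have "cdet n A = sum f {w. w permutes {1..n}}" unfolding cdet_def f_def by simp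
  also have "\<dots> = sum (f \<circ> g) (W0 \<times> Pj)" unfolding img using sum.reindex[OF inj] .
  also have "\<dots> = (\<Sum>w0\<in>W0. \<Sum>\<pi>\<in>Pj. f (w0 \<circ> \<pi>))"
    by (simp add: sum.cartesian_product g_def comp_def case_prod_beta)
  also have "\<dots> = 0"
  proof (rule sum.neutral, rule ballI)
    fix w0 assume w0: "w0 \<in> W0"
    have w0p: "w0 permutes {1..n}" and w0i: "incr j w0" using w0 unfolding W0_def by auto
    define P2 where "P2 = prod_list (map (\<lambda>k. A (w0 k) k) [j+1..<n+1])"
    have split: "[1..<n+1] = [1..<j+1] @ [j+1..<n+1]"
      using upt_add_eq_append[of 1 "j+1" "n-j"] assms(2) by (simp del: upt_Suc)
    have hterm: "f (w0 \<circ> \<pi>) = of_int (sign w0) * (of_int (sign \<pi>) * prod_list (map (\<lambda>k. A (w0 (\<pi> k)) k) [1..<j+1])) * P2"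
      if pi: "\<pi> \<in> Pj" for \<pi>
    proof -
      have pp: "\<pi> permutes {1..j}" using pi unfolding Pj_def by simp
      have sg: "sign (w0 \<circ> \<pi>) = sign w0 * sign \<pi>"
        by (rule sign_compose) (use w0p pp permutation_permutes in auto)
      have m2: "map (\<lambda>k. A (w0 (\<pi> k)) k) [j+1..<n+1] = map (\<lambda>k. A (w0 k) k) [j+1..<n+1]"
        using pp by (auto simp: permutes_not_in)
      have "f (w0 \<circ> \<pi>) = of_int (sign w0) * of_int (sign \<pi>) * (prod_list (map (\<lambda>k. A (w0 (\<pi> k)) k) [1..<j+1]) * P2)"
        unfolding f_def sg split P2_def map_append prod_list.append comp_apply m2 of_int_mult by (rule refl)
      then show ?thesis by (simp del: upt_Suc add: mult.assoc)
    qed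
    have "(\<Sum>\<pi>\<in>Pj. f (w0 \<circ> \<pi>)) = of_int (sign w0) * (\<Sum>\<pi>\<in>Pj. of_int (sign \<pi>) * prod_list (map (\<lambda>k. A (w0 (\<pi> k)) k) [1..<j+1])) * P2"
      by (simp add: hterm sum_distrib_left sum_distrib_right)
    also have "(\<Sum>\<pi>\<in>Pj. of_int (sign \<pi>) * prod_list (map (\<lambda>k. A (w0 (\<pi> k)) k) [1..<j+1])) = cdet j (left_minor A w0)"
      unfolding cdet_def left_minor_def Pj_def by simp
    also have "row_selection n j w0"
      unfolding row_selection_def using w0i permutes_in_image[OF w0p] assms(2) unfolding incr_def by auto
    then have "cdet j (left_minor A w0) = 0" using assms(3) by blast
    finally show "(\<Sum>\<pi>\<in>Pj. f (w0 \<circ> \<pi>)) = 0" by (simp only: mult_zero_left mult_zero_right)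
  qed
  finally show ?thesis .
qed

end
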